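(* Let $G$ be a $2$-connected cubic multigraph. For every tombolo-cut $(U,\bar U)$ of $G$, the two edges of its cut-set share no endpoint.
   Context: Multigraphs are finite and loopless, parallel edges allowed. A cut of $G$ is a bipartition $(U,\bar U)$ of $V(G)$ with $\bar U=V(G)\setminus U$; its cut-set is the set of edges with one endpoint in $U$ and the other in $\bar U$. A tombolo-cut is a cut whose cut-set has exactly $2$ edges. *)

theory Defs
  imports Main
begin

text \<open>A finite loopless multigraph: vertex set V, edge set E (edges are abstract
  objects, so parallel edges are allowed), and an endpoint map assigning to each
  edge a set of exactly two distinct vertices of V.\<close>
definition multigraph :: "'a set \<Rightarrow> 'e set \<Rightarrow> ('e \<Rightarrow> 'a set) \<Rightarrow> bool" where
  "multigraph V E ends \<longleftrightarrow> finite V \<and> finite E \<and>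
     (\<forall>e\<in>E. ends e \<subseteq> V \<and> card (ends e) = 2)"

definition degree :: "'e set \<Rightarrow> ('e \<Rightarrow> 'a set) \<Rightarrow> 'a \<Rightarrow> nat" where
  "degree E ends v = card {e\<in>E. v \<in> ends e}"

definition cubic :: "'a set \<Rightarrow> 'e set \<Rightarrow> ('e \<Rightarrow> 'a set) \<Rightarrow> bool" where
  "cubic V E ends \<longleftrightarrow> (\<forall>v\<in>V. degree E ends v = 3)"

definition adj_in :: "'a set \<Rightarrow> 'e set \<Rightarrow> ('e \<Rightarrow> 'a set) \<Rightarrow> ('a \<times> 'a) set" where
  "adj_in S E ends = {(x, y). x \<in> S \<and> y \<in> S \<and> (\<exists>e\<in>E. ends e = {x, y})}"

definition connected_in :: "'a set \<Rightarrow> 'e set \<Rightarrow> ('e \<Rightarrow> 'a set) \<Rightarrow> bool" where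
  "connected_in S E ends \<longleftrightarrow> S \<noteq> {} \<and> (\<forall>x\<in>S. \<forall>y\<in>S. (x, y) \<in> (adj_in S E ends)\<^sup>*)"

text \<open>2-connected (Diestel): more than 2 vertices and G - X connected whenever |X| < 2.\<close>
definition two_connected :: "'a set \<Rightarrow> 'e set \<Rightarrow> ('e \<Rightarrow> 'a set) \<Rightarrow> bool" where
  "two_connected V E ends \<longleftrightarrow> card V > 2 \<and> connected_in V E ends \<and>
     (\<forall>v\<in>V. connected_in (V - {v}) E ends)"

definition cut_set :: "'a set \<Rightarrow> 'e set \<Rightarrow> ('e \<Rightarrow> 'a set) \<Rightarrow> 'a set \<Rightarrow> 'e set" where
  "cut_set V E ends U = {e\<in>E. ends e \<inter> U \<noteq> {} \<and> ends e \<inter> (V - U) \<noteq> {}}"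

definition tombolo_cut :: "'a set \<Rightarrow> 'e set \<Rightarrow> ('e \<Rightarrow> 'a set) \<Rightarrow> 'a set \<Rightarrow> bool" where
  "tombolo_cut V E ends U \<longleftrightarrow> U \<subseteq> V \<and> card (cut_set V E ends U) = 2"

end

theory Submission
  imports Defs
begin

theorem proposition10:
  fixes V :: "'a set" and E :: "'e set" and ends :: "'e \<Rightarrow> 'a set" and U :: "'a set"
  assumes "multigraph V E ends"
    and "cubic V E ends"
    and "two_connected V E ends"
    and "tombolo_cut V E ends U"
  shows "\<forall>e1\<in>cut_set V E ends U. \<forall>e2\<in>cut_set V E ends U.
           e1 \<noteq> e2 \<longrightarrow> ends e1 \<inter> ends e2 = {}"
proof (intro ballI impI, rule ccontr)
  fix e1 e2
  assume e1: "e1 \<in> cut_set V E ends U" and e2: "e2 \<in> cut_set V E ends U"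
    and ne: "e1 \<noteq> e2" and int: "ends e1 \<inter> ends e2 \<noteq> {}"
  let ?C = "cut_set V E ends U"
  have fE: "finite E" and en: "\<And>e. e \<in> E \<Longrightarrow> ends e \<subseteq> V \<and> card (ends e) = 2"
    using assms(1) by (auto simp: multigraph_def)
  have fC: "finite ?C" using fE by (simp add: cut_set_def)
  have c2: "card ?C = 2" using assms(4) by (simp add: tombolo_cut_def)
  have C: "?C = {e1, e2}"
    using card_subset_eq[OF fC, of "{e1,e2}"] e1 e2 ne c2 by auto
  obtain v where v1: "v \<in> ends e1" and v2: "v \<in> ends e2" using int by blast
  have e1E: "e1 \<in> E" using e1 by (simp add: cut_set_def)
  have e2E: "e2 \<in> E" using e2 by (simp add: cut_set_def)
  have vV: "v \<in> V" using en[OF e1E] v1 by auto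
  obtain a where a: "ends e1 = {v, a}" "a \<noteq> v"
  proof -
    from en[OF e1E] obtain x y where "ends e1 = {x,y}" "x \<noteq> y" by (meson card_2_iff)
    then show ?thesis using that v1 by auto
  qed
  have aV: "a \<in> V" using en[OF e1E] a by auto
  have aU: "(a \<in> U) \<noteq> (v \<in> U)" using e1 a(1) by (auto simp: cut_set_def)
  let ?D = "{e\<in>E. v \<in> ends e}"
  have D3: "card ?D = 3" using assms(2) vV by (simp add: cubic_def degree_def)
  have "\<not> ?D \<subseteq> {e1, e2}"
  proof
    assume "?D \<subseteq> {e1, e2}"
    then have "card ?D \<le> card {e1,e2}" by (intro card_mono) auto
    then show False using D3 ne by simp
  qed
  then obtain e3 where e3: "e3 \<in> E" "v \<in> ends e3" "e3 \<noteq> e1" "e3 \<noteq> e2" by blast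
  obtain c where c: "ends e3 = {v, c}" "c \<noteq> v"
  proof -
    from en[OF e3(1)] obtain x y where "ends e3 = {x,y}" "x \<noteq> y" by (meson card_2_iff)
    then show ?thesis using that e3(2) by auto
  qed
  have cV: "c \<in> V" using en[OF e3(1)] c by auto
  have cU: "(c \<in> U) = (v \<in> U)"
  proof (rule ccontr)
    assume "(c \<in> U) \<noteq> (v \<in> U)"
    then have "e3 \<in> ?C" using e3 c cV vV by (auto simp: cut_set_def)
    then show False using C e3 by auto
  qed
  have conn: "(c, a) \<in> (adj_in (V - {v}) E ends)\<^sup>*"
    using assms(3) vV cV aV c a unfolding two_connected_def connected_in_def by blast
  have "(y \<in> U) = (v \<in> U)" if "(x, y) \<in> (adj_in (V - {v}) E ends)\<^sup>*" "(x \<in> U) = (v \<in> U)" for x y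
    using that
  proof (induction rule: rtrancl_induct)
    case base
    then show ?case by simp
  next
    case (step y z)
    from step(2) obtain e where e: "e \<in> E" "ends e = {y, z}" "y \<in> V - {v}" "z \<in> V - {v}"
      by (auto simp: adj_in_def)
    show ?case
    proof (rule ccontr)
      assume "(z \<in> U) \<noteq> (v \<in> U)"
      then have "e \<in> ?C" using e step by (auto simp: cut_set_def)
      then have "e = e1 \<or> e = e2" using C by auto
      then have "v \<in> ends e" using v1 v2 by auto
      then show False using e by auto
    qed
  qed
  from this[OF conn cU] aU show False by simp
qed

end
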